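(* Let $q$ be a prime power and let $M$ be a $2\times 2$ matrix over $\mathbb{F}_{q^2}$ having a unique eigenvalue $c$, whose eigenspace is one-dimensional and generated by an eigenvector $u\in\mathbb{F}_{q^2}^2$ with $\langle u,u\rangle\neq 0$. Then $0\notin\mathrm{Num}'_0(M)$. If $q$ is even, then $\mathrm{Num}'_0(M)=\mathbb{F}_{q^2}^*$. If $q$ is odd, then $\sharp(\mathrm{Num}'_0(M))=(q^2-1)/2$.
   Context: The Hermitian form on $\mathbb{F}_{q^2}^n$ is $\langle u,v\rangle=\sum_i u_i^q v_i$. For an $n\times n$ matrix $M$ over $\mathbb{F}_{q^2}$ with $n\ge 2$, $\mathrm{Num}'_0(M)=\{\langle u,Mu\rangle: u\in\mathbb{F}_{q^2}^n\setminus\{0\},\ \langle u,u\rangle=0\}$. *)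

theory Defs
  imports "HOL-Analysis.Finite_Cartesian_Product" "HOL-Computational_Algebra.Primes"
begin

definition herm :: "nat \<Rightarrow> ('a::comm_ring_1) ^ 'n \<Rightarrow> 'a ^ 'n \<Rightarrow> 'a" where
  "herm q u v = (\<Sum>i\<in>UNIV. (u $ i) ^ q * v $ i)"

definition Num0' :: "nat \<Rightarrow> ('a::comm_ring_1) ^ 'n ^ 'n \<Rightarrow> 'a set" where
  "Num0' q M = {herm q u (M *v u) | u. u \<noteq> 0 \<and> herm q u u = 0}"

definition prime_power :: "nat \<Rightarrow> bool" where
  "prime_power q \<longleftrightarrow> (\<exists>p k. prime p \<and> k > 0 \<and> q = p ^ k)"

definition mat_eigenvalues :: "('a::field) ^ 'n ^ 'n \<Rightarrow> 'a set" where
  "mat_eigenvalues M = {c. \<exists>v. v \<noteq> 0 \<and> M *v v = c *s v}"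

definition mat_eigenspace :: "('a::field) ^ 'n ^ 'n \<Rightarrow> 'a \<Rightarrow> ('a ^ 'n) set" where
  "mat_eigenspace M c = {v. M *v v = c *s v}"

end

theory Submission imports Defs "HOL-Analysis.Cartesian_Space" "HOL-Computational_Algebra.Polynomial"
begin

lemma ff_pow_card: "(x::'a::{field,finite}) ^ CARD('a) = x"
proof (cases "x = 0")
  case False
  have "x * (\<Prod>y\<in>UNIV-{0}. x * y) = x * x ^ (CARD('a) - 1) * \<Prod>(UNIV-{0::'a})"
    by (simp add: prod.distrib mult_ac)
  also have "x * x ^ (CARD('a) - 1) = x ^ Suc (CARD('a) - 1)"
    by (subst power_Suc) auto
  also have "Suc (CARD('a) - 1) = CARD('a)"
    using finite_UNIV_card_ge_0[where ?'a = 'a] by simp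
  also have "(\<Prod>y\<in>UNIV-{0}. x * y) = (\<Prod>y\<in>UNIV-{0::'a}. y)"
    by (rule prod.reindex_bij_witness[of _ "\<lambda>y. y / x" "\<lambda>y. x * y"]) (use False in auto)
  finally show ?thesis
    by simp
qed (use finite_UNIV_card_ge_0[where ?'a = 'a] in auto)

lemma ff_pow_card1: "(x::'a::{field,finite}) \<noteq> 0 \<Longrightarrow> x ^ (CARD('a) - 1) = 1"
proof -
  assume x: "x \<noteq> 0"
  have "x * x ^ (CARD('a) - 1) = x ^ Suc (CARD('a) - 1)" by (simp only: power_Suc)
  also have "Suc (CARD('a) - 1) = CARD('a)"
    using finite_UNIV_card_ge_0[where ?'a = 'a] by simp
  finally have "x * x ^ (CARD('a) - 1) = x * 1" using ff_pow_card by simp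
  thus ?thesis using x by simp
qed

lemma ff_of_nat_card: "(of_nat CARD('a) :: 'a::{field,finite}) = 0"
proof -
  have "(\<Sum>y\<in>UNIV. 1 + y) = (\<Sum>y\<in>(UNIV::'a set). y)"
    by (rule sum.reindex_bij_witness[of _ "\<lambda>y. y - 1" "\<lambda>y. y + 1"]) auto
  thus ?thesis by (simp add: sum.distrib)
qed

lemma root_bound:
  assumes "m \<ge> 1"
  shows "card {x::'a::field. x ^ m = d} \<le> m"
proof -
  let ?p = "monom (1::'a) m + [:-d:]"
  have deg: "degree ?p = m" using assms
    by (subst degree_add_eq_left) (auto simp: degree_monom_eq)
  hence "?p \<noteq> 0" using assms by auto
  from card_poly_roots_bound[OF this] have "card {x. poly ?p x = 0} \<le> m" using deg by simp
  moreover have "{x. poly ?p x = 0} = {x. x ^ m = d}" by (auto simp: poly_monom add_eq_0_iff2)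
  ultimately show ?thesis by simp
qed

lemma power_image:
  fixes m k :: nat
  assumes "m \<ge> 1" "k \<ge> 1" "m * k = CARD('a::{field,finite}) - 1"
  shows "(\<lambda>x. x ^ m) ` (UNIV - {0::'a}) = {d. d ^ k = 1}"
    and "card {d::'a. d ^ k = 1} = k"
proof -
  let ?I = "(\<lambda>x. x ^ m) ` (UNIV - {0::'a})"
  let ?R = "{d::'a. d ^ k = 1}"
  have sub: "?I \<subseteq> ?R"
  proof
    fix d assume "d \<in> ?I"
    then obtain x where x: "x \<noteq> 0" "d = x ^ m" by auto
    have "d ^ k = x ^ (m * k)" by (simp add: x power_mult)
    also have "\<dots> = 1" using ff_pow_card1[OF x(1)] assms(3) by simp
    finally show "d \<in> ?R" by simp
  qed
  have cR: "card ?R \<le> k" using root_bound[OF assms(2), of 1] by simp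
  have "UNIV - {0::'a} \<subseteq> (\<Union>d\<in>?I. {x. x ^ m = d})" by auto
  hence "card (UNIV - {0::'a}) \<le> card (\<Union>d\<in>?I. {x. x ^ m = d})"
    by (intro card_mono) auto
  also have "\<dots> \<le> (\<Sum>d\<in>?I. card {x::'a. x ^ m = d})" by (rule card_UN_le) auto
  also have "\<dots> \<le> (\<Sum>d\<in>?I. m)" by (intro sum_mono root_bound assms(1))
  also have "\<dots> = card ?I * m" by simp
  finally have "m * k \<le> m * card ?I" using assms(3) by (simp add: card_Diff_singleton mult.commute)
  hence "k \<le> card ?I" using assms(1) by simp
  moreover have "card ?I \<le> card ?R" by (intro card_mono sub) auto
  ultimately have eq: "card ?I = card ?R" "card ?R = k" using cR by linarith+
  show "?I = ?R" using card_subset_eq[OF _ sub eq(1)] by simp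
  show "card ?R = k" by fact
qed


lemma char_eq:
  assumes "prime p" "k > 0" "CARD('a::{field,finite}) = (p ^ k) ^ 2"
  shows "CHAR('a) = p"
proof -
  have pos: "CHAR('a) > 0" by (rule finite_imp_CHAR_pos) simp
  have pr: "prime CHAR('a)" by (rule prime_CHAR_semidom[OF pos])
  have "of_nat (p ^ (2*k)) = (0::'a)" using ff_of_nat_card[where 'a='a] assms(3)
    by (simp add: power_mult[symmetric] mult.commute)
  hence "CHAR('a) dvd p ^ (2*k)" by (simp only: of_nat_eq_0_iff_char_dvd)
  hence "CHAR('a) dvd p" by (rule prime_dvd_power[OF pr])
  thus ?thesis using pr assms(1) by (simp add: primes_dvd_imp_eq)
qed


lemma W_nonzero:
  assumes "q > 0" "b \<noteq> 0" "a ^ q * a + b ^ q * b = (0::'a::field)"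
  shows "a ^ q * b \<noteq> 0"
proof
  assume "a ^ q * b = 0"
  hence "a = 0" using assms(2) by simp
  hence "b ^ q * b = 0" using assms by (simp add: zero_power)
  thus False using assms(2) by simp
qed

lemma W_even:
  assumes "CHAR('a::{field,finite}) = 2" "q > 0" "even q" "CARD('a) = q ^ 2"
    and fr: "\<And>x::'a. (x ^ q) ^ q = x"
  shows "{a ^ q * b | a b. b \<noteq> 0 \<and> a ^ q * a + b ^ q * b = 0} = UNIV - {0::'a}"
proof
  show "{a ^ q * b | a b. b \<noteq> 0 \<and> a ^ q * a + b ^ q * b = 0} \<subseteq> UNIV - {0::'a}"
    using W_nonzero[OF assms(2)] by auto
  show "UNIV - {0::'a} \<subseteq> {a ^ q * b | a b. b \<noteq> 0 \<and> a ^ q * a + b ^ q * b = 0}"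
  proof
    fix y :: 'a assume y: "y \<in> UNIV - {0}"
    define s where "s = y ^ (CARD('a) div 2)"
    have ev: "even (CARD('a))" using assms(3,4) by simp
    have ss: "s * s = y" unfolding s_def
      by (metis ev ff_pow_card power_add dvd_mult_div_cancel mult_2)
    hence s0: "s \<noteq> 0" using y by auto
    have two: "\<And>x::'a. x + x = 0"
      using uminus_CHAR_2[OF assms(1)] by (metis add.right_inverse)
    have "(s ^ q) ^ q * s ^ q + s ^ q * s = 0" using fr[of s] two[of "s * s ^ q"] by (simp add: mult.commute)
    moreover have "(s ^ q) ^ q * s = y" using fr[of s] ss by simp
    ultimately show "y \<in> {a ^ q * b | a b. b \<noteq> 0 \<and> a ^ q * a + b ^ q * b = 0}"
      using s0 by blast
  qed
qed

lemma W_odd: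
  assumes "odd q" "q \<ge> 3" "CARD('a::{field,finite}) = q ^ 2"
    and fr: "\<And>x::'a. (x ^ q) ^ q = x"
  shows "card {a ^ q * b | a b. b \<noteq> 0 \<and> a ^ q * a + b ^ q * b = (0::'a)} = (q ^ 2 - 1) div 2"
proof -
  obtain h where h: "q = 2 * h + 1" using assms(1) oddE by blast
  have h1: "h \<ge> 1" using h assms(2) by simp
  have cm1: "CARD('a) - 1 = (q + 1) * (q - 1)" using assms(3)
    by (simp add: power2_eq_square algebra_simps)
  have cm2: "CARD('a) - 1 = 2 * ((q + 1) * h)" using cm1 h by simp
  define K where "K = (q + 1) * h"
  have K2: "2 * K = CARD('a) - 1" using cm2 by (simp add: K_def)
  have one: "\<And>x::'a. x \<noteq> 0 \<Longrightarrow> x ^ (2 * K) = 1" unfolding K2 by (rule ff_pow_card1)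
  have "(\<lambda>x. x ^ (q + 1)) ` (UNIV - {0::'a}) = {d. d ^ (q - 1) = 1}"
    by (rule power_image(1)) (use cm1 assms(2) in auto)
  moreover have "(-1::'a) ^ (q - 1) = 1" using h by simp
  ultimately have "(-1::'a) \<in> (\<lambda>x. x ^ (q + 1)) ` (UNIV - {0::'a})" by simp
  then obtain t0 :: 'a where t0a: "t0 \<in> UNIV - {0}" "-1 = t0 ^ (q + 1)" by (rule imageE)
  hence t0: "t0 \<noteq> 0" "t0 ^ (q + 1) = -1" by simp_all
  define Sq where "Sq = (\<lambda>x. x ^ 2) ` (UNIV - {0::'a})"
  have Sq: "Sq = {d. d ^ K = 1}" "card {d::'a. d ^ K = 1} = K"
    unfolding Sq_def by (rule power_image[of 2 K]; use cm2 K_def h1 in simp)+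
  have W: "{a ^ q * b | a b. b \<noteq> 0 \<and> a ^ q * a + b ^ q * b = (0::'a)} = (\<lambda>y. t0 ^ q * y) ` Sq"
  proof
    show "{a ^ q * b | a b. b \<noteq> 0 \<and> a ^ q * a + b ^ q * b = (0::'a)} \<subseteq> (\<lambda>y. t0 ^ q * y) ` Sq"
    proof
      fix x assume "x \<in> {a ^ q * b | a b. b \<noteq> 0 \<and> a ^ q * a + b ^ q * b = (0::'a)}"
      then obtain a b where ab: "x = a ^ q * b" "b \<noteq> 0" "a ^ q * a + b ^ q * b = 0" by blast
      define r where "r = a / (t0 * b)"
      have "r ^ q * r = (a ^ q * a) / ((t0 ^ q * t0) * (b ^ q * b))"
        unfolding r_def by (simp add: power_divide power_mult_distrib)
      also have "a ^ q * a = - (b ^ q * b)" using ab(3) by (simp add: eq_neg_iff_add_eq_0)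
      also have "t0 ^ q * t0 = -1" using t0(2) by (simp add: mult.commute)
      finally have r1: "r ^ (q + 1) = 1" using ab(2) by (simp add: mult.commute)
      define y where "y = r ^ q * b ^ (q + 1)"
      have rq: "r ^ q = a ^ q / (t0 ^ q * b ^ q)" unfolding r_def by (simp add: power_divide power_mult_distrib)
      have xy: "x = t0 ^ q * y" unfolding y_def rq ab(1) using t0(1) ab(2)
        by (simp add: field_simps)
      have e1: "q * K = (q + 1) * (q * h)" by (simp add: K_def algebra_simps)
      have e2: "(q + 1) * K = (2 * K) * (h + 1)" by (simp add: K_def h algebra_simps)
      have "y ^ K = (r ^ q) ^ K * (b ^ (q + 1)) ^ K"
        unfolding y_def by (simp add: power_mult_distrib)
      also have "(r ^ q) ^ K = (r ^ (q + 1)) ^ (q * h)" unfolding power_mult[symmetric] e1 by (rule refl)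
      also have "(b ^ (q + 1)) ^ K = (b ^ (2 * K)) ^ (h + 1)" unfolding power_mult[symmetric] e2 by (rule refl)
      also have "\<dots> = 1" using r1 one[OF ab(2)] by simp
      finally have "y \<in> Sq" using Sq(1) r1 by simp
      thus "x \<in> (\<lambda>y. t0 ^ q * y) ` Sq" using xy by blast
    qed
    show "(\<lambda>y. t0 ^ q * y) ` Sq \<subseteq> {a ^ q * b | a b. b \<noteq> 0 \<and> a ^ q * a + b ^ q * b = (0::'a)}"
    proof
      fix x assume "x \<in> (\<lambda>y. t0 ^ q * y) ` Sq"
      then obtain s where s: "s \<noteq> 0" "x = t0 ^ q * s ^ 2" unfolding Sq_def by auto
      have aq: "(t0 * s ^ q) ^ q = t0 ^ q * s" using fr[of s] by (simp add: power_mult_distrib)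
      have "(t0 * s ^ q) ^ q * (t0 * s ^ q) + s ^ q * s = (t0 ^ q * t0 + 1) * (s ^ q * s)"
        unfolding aq by (simp add: algebra_simps)
      also have "t0 ^ q * t0 = -1" using t0(2) by (simp add: mult.commute)
      finally have e: "(t0 * s ^ q) ^ q * (t0 * s ^ q) + s ^ q * s = 0" by simp
      have "x = (t0 * s ^ q) ^ q * s" unfolding aq s(2) by (simp add: power2_eq_square)
      thus "x \<in> {a ^ q * b | a b. b \<noteq> 0 \<and> a ^ q * a + b ^ q * b = (0::'a)}" using e s(1) by blast
    qed
  qed
  have "card ((\<lambda>y. t0 ^ q * y) ` Sq) = card Sq"
    by (rule card_image) (use t0(1) in \<open>auto simp: inj_on_def\<close>)
  also have "\<dots> = K" using Sq by simp
  also have "K = (q ^ 2 - 1) div 2" using K2 assms(3) by simp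
  finally show ?thesis using W by simp
qed


lemma matrix_part:
  fixes q :: nat and M :: "('a::{field,finite}) ^ 2 ^ 2" and c :: 'a and u :: "'a ^ 2"
  assumes q0: "q > 0"
    and fr_add: "\<And>x y::'a. (x + y) ^ q = x ^ q + y ^ q"
    and fr_neg: "\<And>x::'a. (- x) ^ q = - (x ^ q)"
    and fr_inv: "\<And>x::'a. (x ^ q) ^ q = x"
    and ev: "mat_eigenvalues M = {c}"
    and u0: "u \<noteq> 0"
    and es: "mat_eigenspace M c = {a *s u | a. True}"
    and hu: "herm q u u \<noteq> 0"
  shows "\<exists>g. g \<noteq> 0 \<and> Num0' q M = (\<lambda>x. g * x) ` {a ^ q * b | a b. b \<noteq> 0 \<and> a ^ q * a + b ^ q * b = 0}"
proof -
  have herm2: "\<And>x y :: 'a^2. herm q x y = x$1 ^ q * y$1 + x$2 ^ q * y$2" by (simp add: herm_def sum_2)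
  have mv1: "\<And>v. (M *v v)$1 = M$1$1 * v$1 + M$1$2 * v$2" by (simp add: matrix_vector_mult_def sum_2)
  have mv2: "\<And>v. (M *v v)$2 = M$2$1 * v$1 + M$2$2 * v$2" by (simp add: matrix_vector_mult_def sum_2)
  have veq: "\<And>x y::'a^2. x = y \<longleftrightarrow> x$1 = y$1 \<and> x$2 = y$2" by (simp add: vec_eq_iff forall_2)
  have E1: "\<And>v d. v \<noteq> 0 \<Longrightarrow> M *v v = d *s v \<Longrightarrow> d = c"
    using ev unfolding mat_eigenvalues_def by blast
  have E2: "\<And>v. M *v v = c *s v \<longleftrightarrow> (\<exists>a. v = a *s u)"
  proof -
    fix v
    have "v \<in> mat_eigenspace M c \<longleftrightarrow> v \<in> {a *s u | a. True}" by (simp add: es)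
    thus "M *v v = c *s v \<longleftrightarrow> (\<exists>a. v = a *s u)" unfolding mat_eigenspace_def by simp
  qed
  define u1 where "u1 = u$1"
  define u2 where "u2 = u$2"
  define \<alpha> where "\<alpha> = u1 ^ q * u1 + u2 ^ q * u2"
  have a0: "\<alpha> \<noteq> 0" using hu by (simp add: herm2 \<alpha>_def u1_def u2_def)
  have u12: "u1 \<noteq> 0 \<or> u2 \<noteq> 0" using u0 by (auto simp: veq u1_def u2_def)
  define w :: "'a^2" where "w = vector [u2 ^ q, - (u1 ^ q)]"
  have w1: "w$1 = u2 ^ q" and w2: "w$2 = - (u1 ^ q)" by (simp_all add: w_def)
  have wnot: "\<not> (\<exists>a. w = a *s u)"
  proof
    assume "\<exists>a. w = a *s u"
    then obtain a where a: "w = a *s u" by blast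
    hence "u2 ^ q = a * u1" "- (u1 ^ q) = a * u2" using w1 w2 by (auto simp: u1_def u2_def)
    hence h: "a * u1 = u2 ^ q" "a * u2 = - (u1 ^ q)" by auto
    hence "u1 ^ q * (a * u1) + u2 ^ q * (a * u2) = 0" by (simp add: mult.commute)
    hence "a * \<alpha> = 0" by (simp add: \<alpha>_def algebra_simps)
    hence "a = 0" using a0 by simp
    hence "u2 ^ q = 0" "u1 ^ q = 0" using \<open>u2 ^ q = a * u1\<close> \<open>- (u1 ^ q) = a * u2\<close> by auto
    thus False using u12 q0 by simp
  qed
  have "\<exists>a. u = a *s u" by (rule exI[of _ 1]) simp
  hence Mu: "M *v u = c *s u" using E2 by blast
  have Mu1: "M$1$1 * u1 + M$1$2 * u2 = c * u1" using Mu mv1[of u] by (simp add: u1_def u2_def)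
  have Mu2: "M$2$1 * u1 + M$2$2 * u2 = c * u2" using Mu mv2[of u] by (simp add: u1_def u2_def)
  define dt where "dt = (M$1$1 - c) * (M$2$2 - c) - M$1$2 * M$2$1"
  have "dt * u1 = (M$2$2 - c) * (M$1$1 * u1 + M$1$2 * u2 - c * u1) - M$1$2 * (M$2$1 * u1 + M$2$2 * u2 - c * u2)"
    by (simp add: dt_def algebra_simps)
  hence d1: "dt * u1 = 0" using Mu1 Mu2 by simp
  have "dt * u2 = (M$1$1 - c) * (M$2$1 * u1 + M$2$2 * u2 - c * u2) - M$2$1 * (M$1$1 * u1 + M$1$2 * u2 - c * u1)"
    by (simp add: dt_def algebra_simps)
  hence d2: "dt * u2 = 0" using Mu1 Mu2 by simp
  have dt0: "dt = 0" using d1 d2 u12 by auto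
  define z where "z = M *v w - c *s w"
  define t where "t = (M$1$1 - c) + (M$2$2 - c)"
  have z1: "z$1 = (M$1$1 - c) * w$1 + M$1$2 * w$2" by (simp add: z_def mv1 algebra_simps)
  have z2: "z$2 = M$2$1 * w$1 + (M$2$2 - c) * w$2" by (simp add: z_def mv2 algebra_simps)
  have "(M *v z)$1 - c * z$1 - t * z$1 = - dt * w$1"
    unfolding mv1 z1 z2 by (simp add: t_def dt_def algebra_simps)
  hence Mz1: "(M *v z)$1 = (c + t) * z$1" using dt0 by (simp add: algebra_simps)
  have "(M *v z)$2 - c * z$2 - t * z$2 = - dt * w$2"
    unfolding mv2 z1 z2 by (simp add: t_def dt_def algebra_simps)
  hence Mz2: "(M *v z)$2 = (c + t) * z$2" using dt0 by (simp add: algebra_simps)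
  have Mz: "M *v z = (c + t) *s z" using Mz1 Mz2 by (simp add: veq)
  have z0: "z \<noteq> 0"
  proof
    assume "z = 0"
    hence "M *v w = c *s w" by (simp add: z_def)
    thus False using E2 wnot by blast
  qed
  have "c + t = c" using E1[OF z0 Mz] .
  hence "M *v z = c *s z" using Mz by simp
  then obtain \<gamma> where g: "z = \<gamma> *s u" using E2 by blast
  have g0: "\<gamma> \<noteq> 0" using z0 g by auto
  have Mw1: "M$1$1 * w$1 + M$1$2 * w$2 = c * w$1 + \<gamma> * u1"
    using arg_cong[OF g, of "\<lambda>v. v$1"] by (simp add: z_def mv1 u1_def algebra_simps)
  have Mw2: "M$2$1 * w$1 + M$2$2 * w$2 = c * w$2 + \<gamma> * u2"
    using arg_cong[OF g, of "\<lambda>v. v$2"] by (simp add: z_def mv2 u2_def algebra_simps)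
  have comp: "herm q (a *s u + b *s w) (a *s u + b *s w) = (a ^ q * a + b ^ q * b) * \<alpha>
      \<and> herm q (a *s u + b *s w) (M *v (a *s u + b *s w)) = c * ((a ^ q * a + b ^ q * b) * \<alpha>) + (\<gamma> * \<alpha>) * (a ^ q * b)"
    for a b
  proof -
    define v where "v = a *s u + b *s w"
    have v1: "v$1 = a * u1 + b * u2 ^ q" by (simp add: v_def u1_def w1)
    have v2: "v$2 = a * u2 + - (b * u1 ^ q)" by (simp add: v_def u2_def w2)
    have vq1: "(v$1) ^ q = a ^ q * u1 ^ q + b ^ q * u2"
      unfolding v1 fr_add by (simp add: power_mult_distrib fr_inv)
    have vq2: "(v$2) ^ q = a ^ q * u2 ^ q - b ^ q * u1"
      unfolding v2 fr_add fr_neg by (simp add: power_mult_distrib fr_inv)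
    have Mv1: "(M *v v)$1 = c * v$1 + b * \<gamma> * u1"
    proof -
      have "(M *v v)$1 = a * (M$1$1 * u1 + M$1$2 * u2) + b * (M$1$1 * w$1 + M$1$2 * w$2)"
        by (simp add: mv1 v_def u1_def u2_def algebra_simps)
      also have "\<dots> = c * v$1 + b * \<gamma> * u1" unfolding Mu1 Mw1 v1 by (simp add: w1 algebra_simps)
      finally show ?thesis .
    qed
    have Mv2: "(M *v v)$2 = c * v$2 + b * \<gamma> * u2"
    proof -
      have "(M *v v)$2 = a * (M$2$1 * u1 + M$2$2 * u2) + b * (M$2$1 * w$1 + M$2$2 * w$2)"
        by (simp add: mv2 v_def u1_def u2_def algebra_simps)
      also have "\<dots> = c * v$2 + b * \<gamma> * u2" unfolding Mu2 Mw2 v2 by (simp add: w2 algebra_simps)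
      finally show ?thesis .
    qed
    have hv: "herm q v v = (a ^ q * a + b ^ q * b) * \<alpha>"
      unfolding herm2 vq1 vq2 unfolding v1 v2 \<alpha>_def by (simp add: algebra_simps)
    have hvu: "(v$1) ^ q * u1 + (v$2) ^ q * u2 = a ^ q * \<alpha>"
      unfolding vq1 vq2 \<alpha>_def by (simp add: algebra_simps)
    have "herm q v (M *v v) = c * herm q v v + b * \<gamma> * ((v$1) ^ q * u1 + (v$2) ^ q * u2)"
      unfolding herm2 Mv1 Mv2 by (simp add: algebra_simps)
    also have "\<dots> = c * ((a ^ q * a + b ^ q * b) * \<alpha>) + (\<gamma> * \<alpha>) * (a ^ q * b)"
      unfolding hv hvu by (simp add: algebra_simps)
    finally show ?thesis using hv by (simp add: v_def)
  qed
  have decomp: "\<exists>a b. v = a *s u + b *s w" for v :: "'a^2"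
  proof -
    define a where "a = (u1 ^ q * v$1 + u2 ^ q * v$2) / \<alpha>"
    define b where "b = (u2 * v$1 - u1 * v$2) / \<alpha>"
    have e1: "(u1 ^ q * v$1 + u2 ^ q * v$2) * u1 + (u2 * v$1 - u1 * v$2) * u2 ^ q = v$1 * \<alpha>"
      by (simp add: \<alpha>_def algebra_simps)
    have e2: "(u1 ^ q * v$1 + u2 ^ q * v$2) * u2 - (u2 * v$1 - u1 * v$2) * u1 ^ q = v$2 * \<alpha>"
      by (simp add: \<alpha>_def algebra_simps)
    have "a * u1 + b * u2 ^ q = ((u1 ^ q * v$1 + u2 ^ q * v$2) * u1 + (u2 * v$1 - u1 * v$2) * u2 ^ q) / \<alpha>"
      unfolding a_def b_def using a0 by (simp add: field_simps)
    also have "\<dots> = v$1" unfolding e1 using a0 by simp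
    finally have f1: "v$1 = a * u1 + b * u2 ^ q" by simp
    have "a * u2 - b * u1 ^ q = ((u1 ^ q * v$1 + u2 ^ q * v$2) * u2 - (u2 * v$1 - u1 * v$2) * u1 ^ q) / \<alpha>"
      unfolding a_def b_def using a0 by (simp add: field_simps)
    also have "\<dots> = v$2" unfolding e2 using a0 by simp
    finally have f2: "v$2 = a * u2 - b * u1 ^ q" by simp
    from f1 f2 have "v$1 = a * u1 + b * u2 ^ q" "v$2 = a * u2 - b * u1 ^ q" by auto
    hence "v = a *s u + b *s w" by (simp add: veq u1_def u2_def w1 w2)
    thus ?thesis by blast
  qed
  let ?W = "{a ^ q * b | a b. b \<noteq> 0 \<and> a ^ q * a + b ^ q * b = (0::'a)}"
  have "Num0' q M = (\<lambda>x. (\<gamma> * \<alpha>) * x) ` ?W"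
  proof
    show "Num0' q M \<subseteq> (\<lambda>x. (\<gamma> * \<alpha>) * x) ` ?W"
    proof
      fix x assume "x \<in> Num0' q M"
      then obtain v where v: "x = herm q v (M *v v)" "v \<noteq> 0" "herm q v v = 0"
        unfolding Num0'_def by blast
      obtain a b where ab: "v = a *s u + b *s w" using decomp by blast
      have iso: "a ^ q * a + b ^ q * b = 0" using comp[of a b] v(3) a0 ab by simp
      have b0: "b \<noteq> 0"
      proof
        assume "b = 0"
        hence "a ^ q * a = 0" using iso by simp
        hence "a = 0" by auto
        thus False using v(2) ab \<open>b = 0\<close> by simp
      qed
      have "x = (\<gamma> * \<alpha>) * (a ^ q * b)" using comp[of a b] v(1) iso ab by simp
      thus "x \<in> (\<lambda>x. (\<gamma> * \<alpha>) * x) ` ?W" using b0 iso by blast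
    qed
    show "(\<lambda>x. (\<gamma> * \<alpha>) * x) ` ?W \<subseteq> Num0' q M"
    proof
      fix x assume "x \<in> (\<lambda>x. (\<gamma> * \<alpha>) * x) ` ?W"
      then obtain a b where ab: "x = (\<gamma> * \<alpha>) * (a ^ q * b)" "b \<noteq> 0" "a ^ q * a + b ^ q * b = 0"
        by blast
      define v where "v = a *s u + b *s w"
      have vn: "v \<noteq> 0"
      proof
        assume "v = 0"
        hence "v$1 = 0" "v$2 = 0" by simp_all
        hence "a * u$1 + b * w$1 = 0" "a * u$2 + b * w$2 = 0"
          unfolding v_def by simp_all
        hence "w = (- a / b) *s u" using ab(2) by (simp add: veq field_simps add_eq_0_iff2)
        thus False using wnot by blast
      qed
      have "herm q v v = 0" "x = herm q v (M *v v)" using comp[of a b] ab by (simp_all add: v_def)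
      thus "x \<in> Num0' q M" unfolding Num0'_def using vn by blast
    qed
  qed
  thus ?thesis using g0 a0 by (intro exI[of _ "\<gamma> * \<alpha>"]) simp
qed


theorem proposition2:
  fixes q :: nat and M :: "('a::{field,finite}) ^ 2 ^ 2" and c :: 'a and u :: "'a ^ 2"
  assumes "prime_power q"
    and "CARD('a) = q ^ 2"
    and "mat_eigenvalues M = {c}"
    and "u \<noteq> 0"
    and "mat_eigenspace M c = {a *s u | a. True}"
    and "herm q u u \<noteq> 0"
  shows "0 \<notin> Num0' q M
    \<and> (even q \<longrightarrow> Num0' q M = UNIV - {0})
    \<and> (odd q \<longrightarrow> card (Num0' q M) = (q ^ 2 - 1) div 2)"
proof -
  obtain p k where pk: "prime p" "k > 0" "q = p ^ k" using assms(1) unfolding prime_power_def by blast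
  have ch: "CHAR('a) = p" by (rule char_eq[OF pk(1,2)]) (use assms(2) pk(3) in simp)
  have p2: "p \<ge> 2" using pk(1) prime_ge_2_nat by blast
  have q0: "q > 0" using pk p2 by simp
  have "p ^ 1 \<le> p ^ k" by (rule power_increasing) (use pk p2 in auto)
  hence q2: "q \<ge> 2" using pk(3) p2 by simp
  have fr_add: "\<And>x y::'a. (x + y) ^ q = x ^ q + y ^ q"
    by (rule freshmans_dream'[of q k]) (use pk(1,3) ch in simp_all)
  have fr_neg: "\<And>x::'a. (- x) ^ q = - (x ^ q)"
  proof -
    fix x :: 'a
    have "x ^ q + (- x) ^ q = (x + - x) ^ q" by (simp only: fr_add)
    also have "\<dots> = 0" using q0 by simp
    finally show "(- x) ^ q = - (x ^ q)" by (simp add: eq_neg_iff_add_eq_0 add.commute)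
  qed
  have fr_inv: "\<And>x::'a. (x ^ q) ^ q = x"
  proof -
    fix x :: 'a
    have "(x ^ q) ^ q = x ^ CARD('a)" by (simp add: assms(2) power_mult[symmetric] power2_eq_square)
    thus "(x ^ q) ^ q = x" by (simp add: ff_pow_card)
  qed
  obtain g where g: "g \<noteq> 0"
    "Num0' q M = (\<lambda>x. g * x) ` {a ^ q * b | a b. b \<noteq> 0 \<and> a ^ q * a + b ^ q * b = 0}"
    using matrix_part[OF q0 fr_add fr_neg fr_inv assms(3-6)] by blast
  let ?W = "{a ^ q * b | a b. b \<noteq> 0 \<and> a ^ q * a + b ^ q * b = (0::'a)}"
  have "0 \<notin> ?W"
  proof
    assume "0 \<in> ?W"
    then obtain a b :: 'a where ab: "0 = a ^ q * b" "b \<noteq> 0" "a ^ q * a + b ^ q * b = 0" by blast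
    show False using W_nonzero[OF q0 ab(2,3)] ab(1) by simp
  qed
  hence A: "0 \<notin> Num0' q M" using g by auto
  have B: "Num0' q M = UNIV - {0}" if ev: "even q"
  proof -
    have "even p" using ev pk by simp
    hence "2 = p" using pk(1) by (intro primes_dvd_imp_eq) auto
    hence "p = 2" by simp
    hence p2: "p = 2" .
    have W: "?W = UNIV - {0}" by (rule W_even) (use ch p2 q0 ev assms(2) fr_inv in simp_all)
    have "(\<lambda>x. g * x) ` (UNIV - {0}) = UNIV - {0::'a}"
    proof
      show "(\<lambda>x. g * x) ` (UNIV - {0}) \<subseteq> UNIV - {0::'a}" using g(1) by auto
      show "UNIV - {0::'a} \<subseteq> (\<lambda>x. g * x) ` (UNIV - {0})"
      proof
        fix y :: 'a assume "y \<in> UNIV - {0}"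
        hence "y = g * (y / g)" "y / g \<in> UNIV - {0}" using g(1) by auto
        thus "y \<in> (\<lambda>x. g * x) ` (UNIV - {0})" by blast
      qed
    qed
    thus ?thesis using g(2) W by simp
  qed
  have C: "card (Num0' q M) = (q ^ 2 - 1) div 2" if od: "odd q"
  proof -
    have q3: "q \<ge> 3" using od q2 by presburger
    have "card (Num0' q M) = card ?W" unfolding g(2)
      by (rule card_image) (use g(1) in \<open>auto simp: inj_on_def\<close>)
    also have "\<dots> = (q ^ 2 - 1) div 2" by (rule W_odd[OF od q3 assms(2) fr_inv])
    finally show ?thesis .
  qed
  show ?thesis using A B C by blast
qed

end
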